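(* Let $\phi_3(x)=\sqrt2\,\mathrm{sech}(x)$, $T(x)=\int_{\mathbb R}e^{-\sqrt2|x-y|}\mathrm{sech}^2(y)\,dy$, $R_1=-x\phi_3\phi_3'-\tfrac{1}{4\sqrt2}(3-\phi_3^2)T-\tfrac{\phi_3'}{2\sqrt2\phi_3}T'$, $R_2=\tfrac12\phi_3^2+\tfrac{3}{4\sqrt2}T+\tfrac{\phi_3'}{2\sqrt2\phi_3}T'$, $E=\tfrac12\phi_3(\tfrac14-\log\phi_3)+\tfrac12x\phi_3'$, $F=E+\phi_3\log\phi_3$, $\Delta_1=F(3(1-\phi_3^2)^2-1)+\phi_3(1-\phi_3^2)^2+6\phi_3(1-\phi_3^2)R_1-2\phi_3R_2$, $\Delta_2=F(1-\phi_3^2)+\phi_3R_1+\phi_3(1-\phi_3^2)R_2$, $h_{3,1}=\tfrac12\phi_3^2\cos x+\tfrac{\phi_3'}{\phi_3}\sin x$, $h_{3,2}=\tfrac{\phi_3'}{\phi_3}\sin x$, and with $\langle f,g\rangle=\int_{\mathbb R}fg\,dx$ set $\gamma_1=\langle\Delta_1,h_{3,1}\rangle$, $\gamma_2=2\langle\Delta_2,h_{3,2}\rangle$, $\gamma_3=\langle(6x\tanh x\,\mathrm{sech}^2x-\tfrac72\mathrm{sech}^2x)\phi_3(1-\phi_3^2),h_{3,1}\rangle$, $\gamma_4=-2\langle E,h_{3,1}\rangle$. For integers $k\ge1$ set (integrals over $\mathbb R$ in $x$) $p_k=\int\mathrm{sech}^k\cos$, $q_k=\int\mathrm{sech}^k\log(\mathrm{sech})\cos$,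 $r_k=\int\mathrm{sech}^kT\cos$, $s_k=\int\mathrm{sech}^kT\tanh\sin$, $a_k=\int x\,\mathrm{sech}^k\tanh\cos$. Then \begin{align*} \gamma_1=&\sqrt2\Big(2p_1+\big(-9\log2-\tfrac{97}{2}\big)p_3+(24\log2+110)p_5+\big(-15\log2-\tfrac{127}{2}\big)p_7\Big)\\ &+\sqrt2\big(q_1-19q_3+48q_5-30q_7-a_1+56a_3-222a_5+180a_7\big)\\ &+4r_1-4r_3-28r_5+30r_7+2s_1+22s_3-30s_5,\\ \gamma_2=&\sqrt2\Big(\big(\tfrac12\log2+\tfrac94\big)p_1+(-4\log2-6)p_3+(4\log2-18)p_5+24p_7\Big)\\ &+\sqrt2\big(q_1-8q_3+8q_5-a_1+21a_3-30a_5\big)+2r_3-2r_5-4s_3+10s_5,\\ \gamma_3=&\sqrt2\Big(-\tfrac{33}{2}p_3+\tfrac{127}{2}p_5-47p_7+18a_3-84a_5+72a_7\Big),\\ \gamma_4=&\sqrt2\big(q_1-q_3+a_1-2a_3\big). \end{align*}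
   Context: $\mathrm{sech},\tanh,\cos,\sin$ denote the functions $\mathrm{sech}(x),\tanh(x),\cos(x),\sin(x)$, products are pointwise, primes denote $d/dx$. *)

theory Defs
  imports "HOL-Analysis.Analysis"
begin

definition sech :: "real \<Rightarrow> real" where
  "sech x = 1 / cosh x"

definition phi3 :: "real \<Rightarrow> real" where
  "phi3 x = sqrt 2 * sech x"

definition T :: "real \<Rightarrow> real" where
  "T x = (LINT y|lborel. exp (- sqrt 2 * \<bar>x - y\<bar>) * (sech y)\<^sup>2)"

definition R1 :: "real \<Rightarrow> real" where
  "R1 x = - x * phi3 x * deriv phi3 x
          - 1 / (4 * sqrt 2) * (3 - (phi3 x)\<^sup>2) * T x
          - deriv phi3 x / (2 * sqrt 2 * phi3 x) * deriv T x"

definition R2 :: "real \<Rightarrow> real" where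
  "R2 x = 1/2 * (phi3 x)\<^sup>2 + 3 / (4 * sqrt 2) * T x
          + deriv phi3 x / (2 * sqrt 2 * phi3 x) * deriv T x"

definition E :: "real \<Rightarrow> real" where
  "E x = 1/2 * phi3 x * (1/4 - ln (phi3 x)) + 1/2 * x * deriv phi3 x"

definition F :: "real \<Rightarrow> real" where
  "F x = E x + phi3 x * ln (phi3 x)"

definition Delta1 :: "real \<Rightarrow> real" where
  "Delta1 x = F x * (3 * (1 - (phi3 x)\<^sup>2)\<^sup>2 - 1) + phi3 x * (1 - (phi3 x)\<^sup>2)\<^sup>2
              + 6 * phi3 x * (1 - (phi3 x)\<^sup>2) * R1 x - 2 * phi3 x * R2 x"

definition Delta2 :: "real \<Rightarrow> real" where
  "Delta2 x = F x * (1 - (phi3 x)\<^sup>2) + phi3 x * R1 x + phi3 x * (1 - (phi3 x)\<^sup>2) * R2 x"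

definition h31 :: "real \<Rightarrow> real" where
  "h31 x = 1/2 * (phi3 x)\<^sup>2 * cos x + deriv phi3 x / phi3 x * sin x"

definition h32 :: "real \<Rightarrow> real" where
  "h32 x = deriv phi3 x / phi3 x * sin x"

definition ip :: "(real \<Rightarrow> real) \<Rightarrow> (real \<Rightarrow> real) \<Rightarrow> real" where
  "ip f g = (LINT x|lborel. f x * g x)"

definition gamma1 :: real where "gamma1 = ip Delta1 h31"
definition gamma2 :: real where "gamma2 = 2 * ip Delta2 h32"
definition gamma3 :: real where
  "gamma3 = ip (\<lambda>x. (6 * x * tanh x * (sech x)\<^sup>2 - 7/2 * (sech x)\<^sup>2) * phi3 x * (1 - (phi3 x)\<^sup>2)) h31"
definition gamma4 :: real where "gamma4 = - 2 * ip E h31"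

definition pk :: "nat \<Rightarrow> real" where
  "pk k = (LINT x|lborel. sech x ^ k * cos x)"
definition qk :: "nat \<Rightarrow> real" where
  "qk k = (LINT x|lborel. sech x ^ k * ln (sech x) * cos x)"
definition rk :: "nat \<Rightarrow> real" where
  "rk k = (LINT x|lborel. sech x ^ k * T x * cos x)"
definition sk :: "nat \<Rightarrow> real" where
  "sk k = (LINT x|lborel. sech x ^ k * T x * tanh x * sin x)"
definition ak :: "nat \<Rightarrow> real" where
  "ak k = (LINT x|lborel. x * sech x ^ k * tanh x * cos x)"

end

theory Submission
  imports Defs "HOL-Probability.Sinc_Integral"
begin

lemma cosh_pos': "cosh (x::real) > 0" by (simp add: cosh_real_pos)
lemma sech_pos: "sech x > 0" unfolding sech_def using cosh_pos' by simp
lemma sech_le1: "sech x \<le> 1" unfolding sech_def using cosh_real_ge_1[of x] by simp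
lemma tanh_sech: "tanh x ^ 2 + sech x ^ 2 = 1"
proof -
  have "tanh x ^ 2 + sech x ^ 2 = (sinh x ^ 2 + 1) / cosh x ^ 2"
    by (simp add: tanh_def sech_def power_divide add_divide_distrib)
  also have "\<dots> = 1" by (simp flip: cosh_square_eq)
  finally show ?thesis .
qed
lemma abs_tanh_le1: "\<bar>tanh (x::real)\<bar> \<le> 1" using tanh_real_lt_1[of x] tanh_real_gt_neg1[of x] by linarith

lemma DERIV_sech[derivative_intros]: "(sech has_real_derivative (- sech x * tanh x)) (at x)"
proof -
  have "((\<lambda>x. 1 / cosh x) has_real_derivative (- sech x * tanh x)) (at x)"
    using cosh_pos'[of x]
    by (auto intro!: derivative_eq_intros simp: sech_def tanh_def field_simps power2_eq_square)
  thus ?thesis unfolding sech_def[abs_def] .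
qed

lemma DERIV_sech_chain[derivative_intros]:
  assumes "(f has_real_derivative f') (at x)"
  shows "((\<lambda>x. sech (f x)) has_real_derivative (- sech (f x) * tanh (f x) * f')) (at x)"
  unfolding sech_def using assms
  by (auto intro!: derivative_eq_intros simp: sech_def tanh_def field_simps power2_eq_square)

lemma DERIV_lnsech[derivative_intros]: "((\<lambda>x. ln (sech x)) has_real_derivative (- tanh x)) (at x)"
  using sech_pos[of x]
  by (auto intro!: derivative_eq_intros)

lemma DERIV_tanh'[derivative_intros]: "(tanh has_real_derivative (sech x ^ 2)) (at x)"
proof -
  have "((\<lambda>x. sinh x / cosh x) has_real_derivative (sech x ^ 2)) (at x)"
    using cosh_pos'[of x] cosh_square_eq[of x]
    by (auto intro!: derivative_eq_intros simp: sech_def field_simps power2_eq_square)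
  thus ?thesis unfolding tanh_def[abs_def] .
qed

lemma isCont_sech[continuous_intros]: "isCont sech x"
  using DERIV_sech DERIV_isCont by blast
lemma continuous_on_sech[continuous_intros]: "continuous_on S (\<lambda>x. sech (f x))" if "continuous_on S f"
  unfolding sech_def using that by (auto intro!: continuous_intros)

lemma ln_sech_bound: "\<bar>ln (sech x)\<bar> \<le> \<bar>x\<bar>"
proof -
  have "cosh x \<le> exp \<bar>x\<bar>" unfolding cosh_def by (cases "x \<ge> 0") auto
  hence "ln (cosh x) \<le> \<bar>x\<bar>" using cosh_pos'[of x]
    by (metis ln_exp ln_le_cancel_iff exp_gt_zero)
  moreover have "ln (cosh x) \<ge> 0" using cosh_real_ge_1[of x] by simp
  moreover have "ln (sech x) = - ln (cosh x)" unfolding sech_def using cosh_pos'[of x] by (simp add: ln_div)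
  ultimately show ?thesis by simp
qed

lemma sech_exp_bound: "sech x \<le> 2 * exp (- \<bar>x\<bar>)"
proof -
  have "exp \<bar>x\<bar> \<le> 2 * cosh x" unfolding cosh_def by (cases "x \<ge> 0") auto
  thus ?thesis unfolding sech_def using cosh_pos'[of x]
    by (simp add: exp_minus field_simps)
qed

lemma poly_exp_bound: "(1 + y)^3 \<le> 27 * exp (y::real)" if "y \<ge> 0"
proof -
  have "1 + y/3 \<le> exp (y/3)" by (rule exp_ge_add_one_self)
  hence "(1 + y/3)^3 \<le> exp (y/3) ^ 3" by (rule power_mono) (use that in simp)
  also have "exp (y/3) ^ 3 = exp y" by (simp flip: exp_of_nat_mult)
  finally have "(1 + y/3)^3 \<le> exp y" .
  moreover have "(1 + y)^3 \<le> (3 + y)^3" by (rule power_mono) (use that in auto)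
  moreover have "(3 + y)^3 = 27 * (1 + y/3)^3" by (simp add: power3_eq_cube field_simps)
  ultimately show ?thesis by linarith
qed

lemma sech_decay: "(1 + \<bar>x\<bar>) * sech x \<le> 54 / (1 + x^2)"
proof -
  have a: "(1 + \<bar>x\<bar>)^3 \<le> 27 * exp \<bar>x\<bar>" by (rule poly_exp_bound) simp
  have b: "1 + x^2 \<le> (1 + \<bar>x\<bar>)^2" by (simp add: power2_eq_square algebra_simps)
  have "(1 + \<bar>x\<bar>) * sech x \<le> (1 + \<bar>x\<bar>) * (2 * exp (- \<bar>x\<bar>))"
    using sech_exp_bound[of x] by (intro mult_left_mono) auto
  also have "\<dots> = 2 * (1 + \<bar>x\<bar>) / exp \<bar>x\<bar>" by (simp add: exp_minus field_simps)
  also have "\<dots> \<le> 2 * (1 + \<bar>x\<bar>) / ((1 + \<bar>x\<bar>)^3 / 27)"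
    using a by (intro divide_left_mono) (auto intro!: mult_pos_pos)
  also have "\<dots> = 54 / (1 + \<bar>x\<bar>)^2"
  proof -
    have "2 * b / (b^3/27) = 54 / b^2" if "b > 0" for b :: real
      using that by (simp add: power2_eq_square power3_eq_cube field_simps)
    thus ?thesis by (metis add_pos_nonneg zero_less_one abs_ge_zero)
  qed
  also have "\<dots> \<le> 54 / (1 + x^2)" using b
    by (intro divide_left_mono) (auto intro!: mult_pos_pos add_pos_nonneg)
  finally show ?thesis .
qed

lemma integrable_inv_sq: "integrable lborel (\<lambda>x::real. inverse (1 + x^2))"
  using integrable_inverse_1_plus_square by (simp add: set_integrable_def)

lemma integrable_decay:
  fixes f :: "real \<Rightarrow> real"
  assumes "continuous_on UNIV f" "\<And>x. \<bar>f x\<bar> \<le> C * ((1 + \<bar>x\<bar>) * sech x)"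
  shows "integrable lborel f"
proof -
  have i: "integrable lborel (\<lambda>x. (C * 54) * inverse (1 + x^2))"
    using integrable_inv_sq by simp
  have m: "f \<in> borel_measurable lborel" using assms(1) by (simp add: borel_measurable_continuous_onI)
  have ae: "AE x in lborel. norm (f x) \<le> norm ((C * 54) * inverse (1 + x^2))"
  proof (intro AE_I2)
    fix x :: real
    have C: "C \<ge> 0"
    proof -
      have "0 \<le> C * ((1 + \<bar>0::real\<bar>) * sech 0)" using assms(2)[of 0] abs_ge_zero order_trans by blast
      thus ?thesis using sech_pos[of 0] by (simp add: zero_le_mult_iff)
    qed
    have "\<bar>f x\<bar> \<le> C * (54 / (1 + x^2))"
      using assms(2)[of x] sech_decay[of x] C by (meson mult_left_mono order_trans)
    thus "norm (f x) \<le> norm ((C * 54) * inverse (1 + x^2))" using C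
      by (simp add: field_simps abs_mult)
  qed
  show ?thesis by (rule Bochner_Integration.integrable_bound[OF i m ae])
qed

lemma decay_tendsto:
  fixes G :: "real \<Rightarrow> real"
  assumes "\<And>x. \<bar>G x\<bar> \<le> C * ((1 + \<bar>x\<bar>) * sech x)"
  shows "(G \<longlongrightarrow> 0) at_top" "(G \<longlongrightarrow> 0) at_bot"
proof -
  have C: "C \<ge> 0"
    proof -
      have "0 \<le> C * ((1 + \<bar>0::real\<bar>) * sech 0)" using assms(1)[of 0] abs_ge_zero order_trans by blast
      thus ?thesis using sech_pos[of 0] by (simp add: zero_le_mult_iff)
    qed
  have b: "norm (G x) \<le> C * 54 / (1 + x^2)" for x
  proof -
    have "C * ((1 + \<bar>x\<bar>) * sech x) \<le> C * (54 / (1 + x^2))"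
      using sech_decay[of x] C by (rule mult_left_mono)
    thus ?thesis using assms(1)[of x] by simp
  qed
  have f1: "filterlim (\<lambda>x::real. 1 + x^2) at_top at_top"
    by (intro filterlim_tendsto_add_at_top[OF tendsto_const] filterlim_pow_at_top filterlim_ident) auto
  have f2: "filterlim (\<lambda>x::real. 1 + x^2) at_top at_bot"
    by (intro filterlim_tendsto_add_at_top[OF tendsto_const] filterlim_pow_at_bot_even filterlim_ident) auto
  have l1: "((\<lambda>x::real. C * 54 / (1 + x^2)) \<longlongrightarrow> 0) at_top"
    by (rule tendsto_divide_0[OF tendsto_const f1[THEN filterlim_mono]]) (auto simp: at_top_le_at_infinity)
  have l2: "((\<lambda>x::real. C * 54 / (1 + x^2)) \<longlongrightarrow> 0) at_bot"
    by (rule tendsto_divide_0[OF tendsto_const f2[THEN filterlim_mono]]) (auto simp: at_top_le_at_infinity)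
  show "(G \<longlongrightarrow> 0) at_top" by (rule Lim_null_comparison[OF _ l1]) (use b in auto)
  show "(G \<longlongrightarrow> 0) at_bot" by (rule Lim_null_comparison[OF _ l2]) (use b in auto)
qed

lemma ibp0:
  fixes G g :: "real \<Rightarrow> real"
  assumes "\<And>x. (G has_real_derivative g x) (at x)" "\<And>x. isCont g x" "integrable lborel g"
    "(G \<longlongrightarrow> 0) at_top" "(G \<longlongrightarrow> 0) at_bot"
  shows "integral\<^sup>L lborel g = 0"
proof -
  have si: "set_integrable lborel (einterval (-\<infinity>) \<infinity>) g"
    using assms(3) unfolding set_integrable_def einterval_eq_UNIV by simp
  have A: "((G \<circ> real_of_ereal) \<longlongrightarrow> 0) (at_right (-\<infinity>))"
    unfolding ereal_tendsto_simps1 by (rule assms(5))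
  have B: "((G \<circ> real_of_ereal) \<longlongrightarrow> 0) (at_left \<infinity>)"
    unfolding ereal_tendsto_simps1 by (rule assms(4))
  have D: "(G has_vector_derivative g x) (at x)" for x
    using assms(1)[of x] by (simp add: has_real_derivative_iff_has_vector_derivative)
  have "(LBINT x=-\<infinity>..\<infinity>. g x) = 0 - 0"
    by (rule interval_integral_FTC_integrable[OF _ D assms(2) si A B]) simp
  thus ?thesis by (simp add: interval_lebesgue_integral_def set_lebesgue_integral_def)
qed

lemma lip_from_deriv:
  fixes f f' :: "real \<Rightarrow> real"
  assumes "\<And>y. (f has_real_derivative f' y) (at y)" "\<And>y. \<bar>f' y\<bar> \<le> M"
  shows "\<bar>f a - f b\<bar> \<le> M * \<bar>a - b\<bar>"
proof -
  have *: "\<bar>f b' - f a'\<bar> \<le> M * \<bar>b' - a'\<bar>" if ab: "a' < b'" for a' b'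
  proof -
    have "\<exists>z. a' < z \<and> z < b' \<and> f b' - f a' = (b' - a') * f' z" by (rule MVT2[OF ab]) (rule assms(1))
    then obtain z where "f b' - f a' = (b' - a') * f' z" by blast
    hence "\<bar>f b' - f a'\<bar> = \<bar>b' - a'\<bar> * \<bar>f' z\<bar>" by (simp add: abs_mult)
    also have "\<dots> \<le> \<bar>b' - a'\<bar> * M" by (intro mult_left_mono assms(2)) auto
    finally show ?thesis by (simp add: mult.commute)
  qed
  show ?thesis
    using *[of a b] *[of b a] by (cases a b rule: linorder_cases) (auto simp: abs_minus_commute)
qed

lemma taylor1_bound:
  fixes g g1 :: "real \<Rightarrow> real"
  assumes "\<And>y. (g has_real_derivative g1 y) (at y)" "\<And>y z. \<bar>g1 y - g1 z\<bar> \<le> M * \<bar>y - z\<bar>"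
  shows "\<bar>g (y + h) - g y - h * g1 y\<bar> \<le> M * h^2"
proof -
  have M: "M \<ge> 0" using assms(2)[of 1 0] by simp
  consider "h = 0" | "h > 0" | "h < 0" by linarith
  thus ?thesis
  proof cases
    case 1 thus ?thesis by simp
  next
    case 2
    obtain z where z: "y < z" "z < y + h" "g (y + h) - g y = (y + h - y) * g1 z"
      using MVT2[of y "y+h" g g1] 2 assms(1) by auto
    have "\<bar>g (y + h) - g y - h * g1 y\<bar> = \<bar>h\<bar> * \<bar>g1 z - g1 y\<bar>"
    proof -
      have "g (y + h) - g y - h * g1 y = h * (g1 z - g1 y)" using z by (simp add: algebra_simps)
      thus ?thesis by (simp add: abs_mult)
    qed
    also have "\<dots> \<le> \<bar>h\<bar> * (M * \<bar>z - y\<bar>)" by (intro mult_left_mono assms(2)) auto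
    also have "\<dots> \<le> \<bar>h\<bar> * (M * \<bar>h\<bar>)" using z 2 M by (intro mult_left_mono) auto
    finally show ?thesis by (simp add: power2_eq_square abs_mult_self_eq mult.assoc mult.left_commute)
  next
    case 3
    obtain z where z: "y + h < z" "z < y" "g y - g (y + h) = (y - (y + h)) * g1 z"
      using MVT2[of "y+h" y g g1] 3 assms(1) by auto
    have "\<bar>g (y + h) - g y - h * g1 y\<bar> = \<bar>h\<bar> * \<bar>g1 z - g1 y\<bar>"
    proof -
      have "g (y + h) - g y - h * g1 y = h * (g1 z - g1 y)" using z by (simp add: algebra_simps)
      thus ?thesis by (simp add: abs_mult)
    qed
    also have "\<dots> \<le> \<bar>h\<bar> * (M * \<bar>z - y\<bar>)" by (intro mult_left_mono assms(2)) auto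
    also have "\<dots> \<le> \<bar>h\<bar> * (M * \<bar>h\<bar>)" using z 3 M by (intro mult_left_mono) auto
    finally show ?thesis by (simp add: power2_eq_square abs_mult_self_eq mult.assoc mult.left_commute)
  qed
qed

lemma conv_integrable:
  fixes w h :: "real \<Rightarrow> real"
  assumes "integrable lborel w" "\<And>u. w u \<ge> 0" "continuous_on UNIV w" "continuous_on UNIV h" "\<And>y. \<bar>h y\<bar> \<le> B"
  shows "integrable lborel (\<lambda>u. w u * h (x - u))"
proof -
  have i: "integrable lborel (\<lambda>u. B * w u)" using assms(1) by simp
  have "continuous_on UNIV (\<lambda>u. x - u)" by (intro continuous_intros)
  hence "continuous_on UNIV (\<lambda>u. h (x - u))"
    using continuous_on_compose2[OF assms(4), of UNIV "\<lambda>u. x - u"] by auto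
  hence "continuous_on UNIV (\<lambda>u. w u * h (x - u))" by (intro continuous_intros assms(3))
  hence m: "(\<lambda>u. w u * h (x - u)) \<in> borel_measurable lborel"
    by (simp add: borel_measurable_continuous_onI)
  have "AE u in lborel. norm (w u * h (x - u)) \<le> norm (B * w u)"
  proof (intro AE_I2)
    fix u
    have B: "B \<ge> 0" using assms(5)[of 0] by simp
    have "\<bar>w u * h (x - u)\<bar> \<le> w u * B" using assms(2)[of u] assms(5)[of "x-u"]
      by (simp add: abs_mult mult_left_mono)
    thus "norm (w u * h (x - u)) \<le> norm (B * w u)" using B assms(2)[of u] by (simp add: mult.commute)
  qed
  thus ?thesis by (rule Bochner_Integration.integrable_bound[OF i m])
qed

lemma conv_bound:
  fixes w h :: "real \<Rightarrow> real"
  assumes "integrable lborel w" "\<And>u. w u \<ge> 0" "continuous_on UNIV w" "continuous_on UNIV h" "\<And>y. \<bar>h y\<bar> \<le> B"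
  shows "\<bar>LINT u|lborel. w u * h (x - u)\<bar> \<le> B * (LINT u|lborel. w u)"
proof -
  have "\<bar>LINT u|lborel. w u * h (x - u)\<bar> \<le> (LINT u|lborel. norm (w u * h (x - u)))"
    using integral_norm_bound[of lborel "\<lambda>u. w u * h (x - u)"] by simp
  also have "\<dots> \<le> (LINT u|lborel. B * w u)"
  proof (intro integral_mono integrable_norm conv_integrable[OF assms])
    show "integrable lborel (\<lambda>u. B * w u)" using assms(1) by simp
    fix u
    have "w u * \<bar>h (x - u)\<bar> \<le> w u * B" by (rule mult_left_mono) (use assms(2,5) in auto)
    thus "norm (w u * h (x - u)) \<le> B * w u" using assms(2)[of u] by (simp add: abs_mult mult.commute)
  qed
  finally show ?thesis by simp
qed

lemma conv_deriv:
  fixes w g g1 :: "real \<Rightarrow> real"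
  assumes w: "integrable lborel w" "\<And>u. w u \<ge> 0" "continuous_on UNIV w"
    and g: "\<And>y. (g has_real_derivative g1 y) (at y)" "\<And>y z. \<bar>g1 y - g1 z\<bar> \<le> M * \<bar>y - z\<bar>"
       "\<And>y. \<bar>g y\<bar> \<le> Bg" "\<And>y. \<bar>g1 y\<bar> \<le> B1" "continuous_on UNIV g1"
  shows "((\<lambda>x. LINT u|lborel. w u * g (x - u)) has_real_derivative (LINT u|lborel. w u * g1 (x - u))) (at x)"
proof -
  have cg: "continuous_on UNIV g"
    using g(1) by (meson DERIV_isCont continuous_at_imp_continuous_on)
  define W where "W = (LINT u|lborel. w u)"
  have M: "M \<ge> 0" using g(2)[of 1 0] by simp
  have W: "W \<ge> 0" unfolding W_def using w(2) by (simp add: integral_nonneg_AE)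
  have ig: "integrable lborel (\<lambda>u. w u * g (y - u))" for y by (rule conv_integrable[OF w cg g(3)])
  have ig1: "integrable lborel (\<lambda>u. w u * g1 (y - u))" for y by (rule conv_integrable[OF w g(5) g(4)])
  let ?F = "\<lambda>x. LINT u|lborel. w u * g (x - u)"
  let ?F1 = "LINT u|lborel. w u * g1 (x - u)"
  have key: "\<bar>(?F (x + h) - ?F x) / h - ?F1\<bar> \<le> M * W * \<bar>h\<bar>" if h: "h \<noteq> 0" for h
  proof -
    have "(LINT u|lborel. w u * (g ((x - u) + h) - g (x - u) - h * g1 (x - u)))
        = (LINT u|lborel. (w u * g (x + h - u) - w u * g (x - u)) - h * (w u * g1 (x - u)))"
      by (intro Bochner_Integration.integral_cong) (auto simp: algebra_simps)
    also have "\<dots> = (LINT u|lborel. w u * g (x + h - u) - w u * g (x - u)) - (LINT u|lborel. h * (w u * g1 (x - u)))"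
      by (intro Bochner_Integration.integral_diff Bochner_Integration.integrable_diff integrable_mult_right ig ig1)
    also have "\<dots> = ?F (x + h) - ?F x - h * ?F1"
      by (subst Bochner_Integration.integral_diff[OF ig ig]) simp
    finally have eq: "?F (x + h) - ?F x - h * ?F1 = (LINT u|lborel. w u * (g ((x - u) + h) - g (x - u) - h * g1 (x - u)))" by simp
    have "\<bar>?F (x + h) - ?F x - h * ?F1\<bar> \<le> (LINT u|lborel. norm (w u * (g ((x - u) + h) - g (x - u) - h * g1 (x - u))))"
      unfolding eq using integral_norm_bound[of lborel "\<lambda>u. w u * (g ((x - u) + h) - g (x - u) - h * g1 (x - u))"]
      by (simp only: real_norm_def)
    also have "\<dots> \<le> (LINT u|lborel. (M * h^2) * w u)"
    proof (intro integral_mono)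
      have eqf: "(\<lambda>u. w u * (g ((x - u) + h) - g (x - u) - h * g1 (x - u))) = (\<lambda>u. w u * g (x + h - u) - w u * g (x - u) - h * (w u * g1 (x - u)))"
        by (auto simp: algebra_simps)
      show "integrable lborel (\<lambda>u. norm (w u * (g ((x - u) + h) - g (x - u) - h * g1 (x - u))))"
        by (intro integrable_norm, unfold eqf) (intro Bochner_Integration.integrable_diff integrable_mult_right ig ig1)
      show "integrable lborel (\<lambda>u. (M * h^2) * w u)" using w(1) by simp
      fix u
      show "norm (w u * (g ((x - u) + h) - g (x - u) - h * g1 (x - u))) \<le> (M * h^2) * w u"
      proof -
        have "\<bar>g ((x - u) + h) - g (x - u) - h * g1 (x - u)\<bar> \<le> M * h^2" by (rule taylor1_bound[OF g(1,2)])
        hence "w u * \<bar>g ((x - u) + h) - g (x - u) - h * g1 (x - u)\<bar> \<le> w u * (M * h^2)" by (rule mult_left_mono) (rule w(2))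
        thus ?thesis using w(2)[of u] by (simp add: abs_mult abs_of_nonneg mult.commute)
      qed
    qed
    also have "\<dots> = M * h^2 * W" unfolding W_def by simp
    finally have a: "\<bar>?F (x + h) - ?F x - h * ?F1\<bar> \<le> M * h^2 * W" .
    have gen1: "(A - B) / h - C = (A - B - h * C) / h" for A B C :: real using h by (simp add: field_simps)
    have gen2: "M * h^2 * W / \<bar>h\<bar> = M * W * \<bar>h\<bar>"
    proof -
      have "h^2 = \<bar>h\<bar> * \<bar>h\<bar>" by (simp only: power2_eq_square abs_mult_self_eq)
      hence "M * h^2 * W / \<bar>h\<bar> = (M * W * \<bar>h\<bar>) * (\<bar>h\<bar> / \<bar>h\<bar>)" by (simp only: ac_simps times_divide_eq_right)
      thus ?thesis using h by simp
    qed
    have "(?F (x + h) - ?F x) / h - ?F1 = (?F (x + h) - ?F x - h * ?F1) / h" by (rule gen1)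
    hence "\<bar>(?F (x + h) - ?F x) / h - ?F1\<bar> = \<bar>?F (x + h) - ?F x - h * ?F1\<bar> / \<bar>h\<bar>" by (simp add: abs_divide)
    also have "\<dots> \<le> M * h^2 * W / \<bar>h\<bar>" using a by (intro divide_right_mono) auto
    also have "\<dots> = M * W * \<bar>h\<bar>" by (rule gen2)
    finally show ?thesis .
  qed
  have "((\<lambda>h. (?F (x + h) - ?F x) / h - ?F1) \<longlongrightarrow> 0) (at 0)"
  proof (rule Lim_null_comparison)
    show "\<forall>\<^sub>F h in at 0. norm ((?F (x + h) - ?F x) / h - ?F1) \<le> M * W * \<bar>h\<bar>"
      using key by (auto simp: eventually_at_filter)
    show "((\<lambda>h. M * W * \<bar>h\<bar>) \<longlongrightarrow> 0) (at 0)"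
      by (intro tendsto_mult_right_zero tendsto_rabs_zero tendsto_ident_at)
  qed
  hence "((\<lambda>h. (?F (x + h) - ?F x) / h) \<longlongrightarrow> ?F1) (at 0)" by (rule LIM_zero_cancel)
  thus ?thesis unfolding DERIV_def .
qed

lemma conv_lip:
  fixes w g1 :: "real \<Rightarrow> real"
  assumes w: "integrable lborel w" "\<And>u. w u \<ge> 0" "continuous_on UNIV w"
    and g: "\<And>y z. \<bar>g1 y - g1 z\<bar> \<le> M * \<bar>y - z\<bar>" "\<And>y. \<bar>g1 y\<bar> \<le> B1" "continuous_on UNIV g1"
  shows "\<bar>(LINT u|lborel. w u * g1 (x - u)) - (LINT u|lborel. w u * g1 (y - u))\<bar> \<le> M * \<bar>x - y\<bar> * (LINT u|lborel. w u)"
proof -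
  have ig1: "integrable lborel (\<lambda>u. w u * g1 (z - u))" for z by (rule conv_integrable[OF w g(3) g(2)])
  have "\<bar>(LINT u|lborel. w u * g1 (x - u)) - (LINT u|lborel. w u * g1 (y - u))\<bar>
      = \<bar>LINT u|lborel. w u * g1 (x - u) - w u * g1 (y - u)\<bar>"
    by (subst Bochner_Integration.integral_diff[OF ig1 ig1]) simp
  also have "\<dots> = \<bar>LINT u|lborel. w u * (g1 (x - u) - g1 (y - u))\<bar>" by (simp add: algebra_simps)
  also have "\<dots> \<le> (LINT u|lborel. norm (w u * (g1 (x - u) - g1 (y - u))))"
    using integral_norm_bound[of lborel "\<lambda>u. w u * (g1 (x - u) - g1 (y - u))"] by (simp only: real_norm_def)
  also have "\<dots> \<le> (LINT u|lborel. (M * \<bar>x - y\<bar>) * w u)"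
  proof (intro integral_mono)
    show "integrable lborel (\<lambda>u. norm (w u * (g1 (x - u) - g1 (y - u))))"
      unfolding right_diff_distrib by (intro integrable_norm Bochner_Integration.integrable_diff ig1)
    show "integrable lborel (\<lambda>u. (M * \<bar>x - y\<bar>) * w u)" using w(1) by simp
    fix u
    show "norm (w u * (g1 (x - u) - g1 (y - u))) \<le> (M * \<bar>x - y\<bar>) * w u"
    proof -
      have "\<bar>g1 (x - u) - g1 (y - u)\<bar> \<le> M * \<bar>x - y\<bar>" using g(1)[of "x - u" "y - u"] by simp
      hence "w u * \<bar>g1 (x - u) - g1 (y - u)\<bar> \<le> w u * (M * \<bar>x - y\<bar>)" by (rule mult_left_mono) (rule w(2))
      thus ?thesis using w(2)[of u] by (simp add: abs_mult abs_of_nonneg mult.commute)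
    qed
  qed
  finally show ?thesis by simp
qed

definition w0 :: "real \<Rightarrow> real" where "w0 u = exp (- sqrt 2 * \<bar>u\<bar>)"
definition g0 :: "real \<Rightarrow> real" where "g0 y = sech y ^ 2"
definition g1 :: "real \<Rightarrow> real" where "g1 y = - 2 * sech y ^ 2 * tanh y"
definition g2 :: "real \<Rightarrow> real" where "g2 y = 4 * sech y ^ 2 * tanh y ^ 2 - 2 * sech y ^ 4"
definition T1 :: "real \<Rightarrow> real" where "T1 x = (LINT u|lborel. w0 u * g1 (x - u))"

lemma sech_ge_exp: "exp (- \<bar>x\<bar>) \<le> sech x"
proof -
  have "cosh x \<le> exp \<bar>x\<bar>" unfolding cosh_def by (cases "x \<ge> 0") auto
  thus ?thesis unfolding sech_def using cosh_pos'[of x] by (simp add: exp_minus field_simps)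
qed

lemma w0_nonneg: "w0 u \<ge> 0" by (simp add: w0_def)
lemma w0_cont: "continuous_on UNIV w0" unfolding w0_def by (intro continuous_intros)
lemma w0_int: "integrable lborel w0"
proof (rule integrable_decay[where C=1])
  show "continuous_on UNIV w0" by (rule w0_cont)
  fix x :: real
  have "1 * \<bar>x\<bar> \<le> sqrt 2 * \<bar>x\<bar>" by (rule mult_right_mono) auto
  hence "w0 x \<le> exp (- \<bar>x\<bar>)" unfolding w0_def by simp
  also have "\<dots> \<le> sech x" by (rule sech_ge_exp)
  also have "\<dots> \<le> (1 + \<bar>x\<bar>) * sech x" using sech_pos[of x] by (simp add: algebra_simps)
  finally show "\<bar>w0 x\<bar> \<le> 1 * ((1 + \<bar>x\<bar>) * sech x)" by (simp add: w0_def)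
qed

lemma sech_sq_le1: "sech x ^ 2 \<le> 1" using sech_pos[of x] sech_le1[of x]
  by (simp add: power_le_one)
lemma tanh_sq_le1: "tanh (x::real) ^ 2 \<le> 1" using tanh_sech[of x] zero_le_power2[of "sech x"] by linarith

lemma g0_deriv: "(g0 has_real_derivative g1 y) (at y)"
  unfolding g0_def[abs_def] g1_def by (auto intro!: derivative_eq_intros simp: power2_eq_square)
lemma g1_deriv: "(g1 has_real_derivative g2 y) (at y)"
  unfolding g1_def[abs_def] g2_def
  by (auto intro!: derivative_eq_intros simp: power2_eq_square power4_eq_xxxx algebra_simps)
lemma g2_bound: "\<bar>g2 y\<bar> \<le> 6"
proof -
  have a: "0 \<le> sech y ^ 2 * tanh y ^ 2" "sech y ^ 2 * tanh y ^ 2 \<le> 1"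
    using sech_sq_le1[of y] tanh_sq_le1[of y] by (auto intro: mult_le_one)
  have b: "0 \<le> sech y ^ 4" "sech y ^ 4 \<le> 1" using sech_pos[of y] sech_le1[of y] by (auto intro: power_le_one)
  have "g2 y = 4 * (sech y ^ 2 * tanh y ^ 2) - 2 * sech y ^ 4" unfolding g2_def by simp
  hence "g2 y \<le> 6" "- g2 y \<le> 6" using a b by linarith+
  thus ?thesis by (simp add: abs_le_iff)
qed
lemma g0_bound: "\<bar>g0 y\<bar> \<le> 1" unfolding g0_def using sech_sq_le1[of y] by simp
lemma g1_bound: "\<bar>g1 y\<bar> \<le> 2"
proof -
  have "\<bar>g1 y\<bar> = 2 * sech y ^ 2 * \<bar>tanh y\<bar>" unfolding g1_def by (simp add: abs_mult)
  also have "\<dots> \<le> 2 * 1 * 1" using sech_sq_le1[of y] abs_tanh_le1[of y]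
    by (intro mult_mono) auto
  finally show ?thesis by simp
qed
lemma g1_lip: "\<bar>g1 y - g1 z\<bar> \<le> 6 * \<bar>y - z\<bar>"
  by (rule lip_from_deriv[OF g1_deriv g2_bound])
lemma g1_cont: "continuous_on UNIV g1"
  using g1_deriv by (meson DERIV_isCont continuous_at_imp_continuous_on)

lemma T_conv: "T x = (LINT u|lborel. w0 u * g0 (x - u))"
proof -
  have "T x = \<bar>-1::real\<bar> *\<^sub>R (LINT u|lborel. exp (- sqrt 2 * \<bar>x - (x + (-1) * u)\<bar>) * (sech (x + (-1) * u))\<^sup>2)"
    unfolding T_def by (rule lborel_integral_real_affine) simp
  also have "\<dots> = (LINT u|lborel. w0 u * g0 (x - u))"
    by (simp add: w0_def g0_def)
  finally show ?thesis .
qed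

lemma T_deriv: "(T has_real_derivative T1 x) (at x)"
proof -
  have "((\<lambda>x. LINT u|lborel. w0 u * g0 (x - u)) has_real_derivative T1 x) (at x)"
    unfolding T1_def
    by (rule conv_deriv[OF w0_int w0_nonneg w0_cont g0_deriv g1_lip g0_bound g1_bound g1_cont])
  moreover have "(\<lambda>x. LINT u|lborel. w0 u * g0 (x - u)) = T" using T_conv by auto
  ultimately show ?thesis by simp
qed

lemma deriv_T: "deriv T = T1"
  using T_deriv DERIV_imp_deriv by blast

definition Wi :: real where "Wi = (LINT u|lborel. w0 u)"

lemma T_bound: "\<bar>T x\<bar> \<le> Wi"
proof -
  have g0c: "continuous_on UNIV g0" using g0_deriv by (meson DERIV_isCont continuous_at_imp_continuous_on)
  show ?thesis unfolding T_conv Wi_def using conv_bound[OF w0_int w0_nonneg w0_cont g0c g0_bound] by simp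
qed

lemma T1_bound: "\<bar>T1 x\<bar> \<le> 2 * Wi"
  unfolding T1_def Wi_def by (rule conv_bound[OF w0_int w0_nonneg w0_cont g1_cont g1_bound])

lemma T1_cont: "continuous_on UNIV T1"
proof -
  have lip: "\<bar>T1 x - T1 y\<bar> \<le> (6 * Wi) * \<bar>x - y\<bar>" for x y
    using conv_lip[OF w0_int w0_nonneg w0_cont g1_lip g1_bound g1_cont, of x y]
    unfolding T1_def Wi_def by (simp add: ac_simps)
  have Wi: "Wi \<ge> 0" unfolding Wi_def using w0_nonneg by (simp add: integral_nonneg_AE)
  show ?thesis
    unfolding continuous_on_iff
  proof (intro ballI allI impI)
    fix x e :: real assume e: "e > 0"
    show "\<exists>d>0. \<forall>x'\<in>UNIV. dist x' x < d \<longrightarrow> dist (T1 x') (T1 x) < e"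
    proof (intro exI[of _ "e / (6 * Wi + 1)"] conjI ballI impI)
      show "e / (6 * Wi + 1) > 0" using e Wi by simp
      fix x' assume "dist x' x < e / (6 * Wi + 1)"
      hence d: "\<bar>x' - x\<bar> * (6 * Wi + 1) < e" using Wi by (simp add: dist_real_def field_simps)
      have "dist (T1 x') (T1 x) \<le> (6 * Wi) * \<bar>x' - x\<bar>" using lip[of x' x] by (simp add: dist_real_def)
      also have "\<dots> \<le> \<bar>x' - x\<bar> * (6 * Wi + 1)" by (simp add: algebra_simps)
      finally show "dist (T1 x') (T1 x) < e" using d by linarith
    qed
  qed
qed

lemma T_cont: "continuous_on UNIV T"
  using T_deriv by (meson DERIV_isCont continuous_at_imp_continuous_on)

definition bP :: "nat \<Rightarrow> real \<Rightarrow> real" where "bP k x = sech x ^ k * cos x"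
definition bQ :: "nat \<Rightarrow> real \<Rightarrow> real" where "bQ k x = sech x ^ k * ln (sech x) * cos x"
definition bR :: "nat \<Rightarrow> real \<Rightarrow> real" where "bR k x = sech x ^ k * T x * cos x"
definition bS :: "nat \<Rightarrow> real \<Rightarrow> real" where "bS k x = sech x ^ k * T x * tanh x * sin x"
definition bA :: "nat \<Rightarrow> real \<Rightarrow> real" where "bA k x = x * sech x ^ k * tanh x * cos x"
definition bSN :: "nat \<Rightarrow> real \<Rightarrow> real" where "bSN k x = sech x ^ k * tanh x * sin x"
definition bSL :: "nat \<Rightarrow> real \<Rightarrow> real" where "bSL k x = sech x ^ k * tanh x * ln (sech x) * sin x"
definition bXN :: "nat \<Rightarrow> real \<Rightarrow> real" where "bXN k x = x * sech x ^ k * sin x"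
definition bDC :: "nat \<Rightarrow> real \<Rightarrow> real" where "bDC k x = T1 x * tanh x * sech x ^ k * cos x"
definition bDN :: "nat \<Rightarrow> real \<Rightarrow> real" where "bDN k x = T1 x * sech x ^ k * sin x"

lemma sech_nz[simp]: "sech x \<noteq> 0" using sech_pos[of x] by simp

lemma Wi_nonneg: "Wi \<ge> 0" unfolding Wi_def using w0_nonneg by (simp add: integral_nonneg_AE)

lemma prod_bound: "\<bar>a\<bar> \<le> A \<Longrightarrow> \<bar>b\<bar> \<le> B \<Longrightarrow> \<bar>a * b\<bar> \<le> A * (B::real)"
  by (simp add: abs_mult mult_mono')

lemma sech_pow_bound:
  assumes "k \<ge> 1" "\<bar>v\<bar> \<le> C * (1 + \<bar>x\<bar>)"
  shows "\<bar>sech x ^ k * v\<bar> \<le> C * ((1 + \<bar>x\<bar>) * sech x)"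
proof -
  have s: "sech x ^ k \<le> sech x"
    using power_decreasing[of 1 k "sech x"] assms(1) sech_pos[of x] sech_le1[of x] by simp
  have "\<bar>sech x ^ k * v\<bar> \<le> sech x * (C * (1 + \<bar>x\<bar>))"
    using s sech_pos[of x] assms(2) by (intro prod_bound) auto
  thus ?thesis by (simp add: ac_simps)
qed

lemma cos_b: "\<bar>cos (x::real)\<bar> \<le> 1" by simp
lemma sin_b: "\<bar>sin (x::real)\<bar> \<le> 1" by simp

lemma lin_b: "\<bar>v\<bar> \<le> C \<Longrightarrow> \<bar>v\<bar> \<le> C * (1 + \<bar>x::real\<bar>)"
proof -
  assume a: "\<bar>v\<bar> \<le> C"
  hence "C \<ge> 0" by linarith
  hence "C * 1 \<le> C * (1 + \<bar>x\<bar>)" by (intro mult_left_mono) auto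
  thus ?thesis using a by simp
qed
lemma lin_b2: "\<bar>v\<bar> \<le> C * \<bar>x\<bar> \<Longrightarrow> C \<ge> 0 \<Longrightarrow> \<bar>v\<bar> \<le> C * (1 + \<bar>x::real\<bar>)"
proof -
  assume a: "\<bar>v\<bar> \<le> C * \<bar>x\<bar>" "C \<ge> 0"
  hence "C * \<bar>x\<bar> \<le> C * (1 + \<bar>x\<bar>)" by (intro mult_left_mono) auto
  thus ?thesis using a by simp
qed

lemma b_cos: "\<bar>cos (x::real)\<bar> \<le> 1" by simp
lemma b_sin: "\<bar>sin (x::real)\<bar> \<le> 1" by simp
lemma b_x: "\<bar>x\<bar> \<le> \<bar>x::real\<bar>" by simp

lemma bound_P: "k \<ge> 1 \<Longrightarrow> \<bar>bP k x\<bar> \<le> 1 * ((1 + \<bar>x\<bar>) * sech x)"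
  unfolding bP_def by (intro sech_pow_bound lin_b b_cos)
lemma bound_Q: "k \<ge> 1 \<Longrightarrow> \<bar>bQ k x\<bar> \<le> 1 * ((1 + \<bar>x\<bar>) * sech x)"
  unfolding bQ_def mult.assoc
  using prod_bound[OF ln_sech_bound[of x] b_cos[of x]] by (intro sech_pow_bound lin_b2) auto
lemma bound_R: "k \<ge> 1 \<Longrightarrow> \<bar>bR k x\<bar> \<le> Wi * ((1 + \<bar>x\<bar>) * sech x)"
  unfolding bR_def mult.assoc
  using prod_bound[OF T_bound[of x] b_cos[of x]] by (intro sech_pow_bound lin_b) auto
lemma bound_S: "k \<ge> 1 \<Longrightarrow> \<bar>bS k x\<bar> \<le> Wi * ((1 + \<bar>x\<bar>) * sech x)"
  unfolding bS_def mult.assoc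
  using prod_bound[OF T_bound[of x] prod_bound[OF abs_tanh_le1[of x] b_sin[of x]]] by (intro sech_pow_bound lin_b) auto
lemma bound_A: "k \<ge> 1 \<Longrightarrow> \<bar>bA k x\<bar> \<le> 1 * ((1 + \<bar>x\<bar>) * sech x)"
proof -
  assume k: "k \<ge> 1"
  have "bA k x = sech x ^ k * (x * (tanh x * cos x))" unfolding bA_def by (simp add: ac_simps)
  moreover have "\<bar>x * (tanh x * cos x)\<bar> \<le> 1 * \<bar>x\<bar>"
    using prod_bound[OF b_x[of x] prod_bound[OF abs_tanh_le1[of x] b_cos[of x]]] by simp
  ultimately show ?thesis using k by (simp only:) (intro sech_pow_bound lin_b2, auto)
qed
lemma bound_SN: "k \<ge> 1 \<Longrightarrow> \<bar>bSN k x\<bar> \<le> 1 * ((1 + \<bar>x\<bar>) * sech x)"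
  unfolding bSN_def mult.assoc
  using prod_bound[OF abs_tanh_le1[of x] b_sin[of x]] by (intro sech_pow_bound lin_b) auto
lemma bound_SL: "k \<ge> 1 \<Longrightarrow> \<bar>bSL k x\<bar> \<le> 1 * ((1 + \<bar>x\<bar>) * sech x)"
  unfolding bSL_def mult.assoc
  using prod_bound[OF abs_tanh_le1[of x] prod_bound[OF ln_sech_bound[of x] b_sin[of x]]] by (intro sech_pow_bound lin_b2) auto
lemma bound_XN: "k \<ge> 1 \<Longrightarrow> \<bar>bXN k x\<bar> \<le> 1 * ((1 + \<bar>x\<bar>) * sech x)"
proof -
  assume k: "k \<ge> 1"
  have "bXN k x = sech x ^ k * (x * sin x)" unfolding bXN_def by (simp add: ac_simps)
  moreover have "\<bar>x * sin x\<bar> \<le> 1 * \<bar>x\<bar>" using prod_bound[OF b_x[of x] b_sin[of x]] by simp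
  ultimately show ?thesis using k by (simp only:) (intro sech_pow_bound lin_b2, auto)
qed
lemma bound_DC: "k \<ge> 1 \<Longrightarrow> \<bar>bDC k x\<bar> \<le> (2 * Wi) * ((1 + \<bar>x\<bar>) * sech x)"
proof -
  assume k: "k \<ge> 1"
  have "bDC k x = sech x ^ k * (T1 x * (tanh x * cos x))" unfolding bDC_def by (simp add: ac_simps)
  moreover have "\<bar>T1 x * (tanh x * cos x)\<bar> \<le> 2 * Wi"
    using prod_bound[OF T1_bound[of x] prod_bound[OF abs_tanh_le1[of x] b_cos[of x]]] by simp
  ultimately show ?thesis using k by (simp only:) (intro sech_pow_bound lin_b)
qed
lemma bound_DN: "k \<ge> 1 \<Longrightarrow> \<bar>bDN k x\<bar> \<le> (2 * Wi) * ((1 + \<bar>x\<bar>) * sech x)"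
proof -
  assume k: "k \<ge> 1"
  have "bDN k x = sech x ^ k * (T1 x * sin x)" unfolding bDN_def by (simp add: ac_simps)
  moreover have "\<bar>T1 x * sin x\<bar> \<le> 2 * Wi"
    using prod_bound[OF T1_bound[of x] b_sin[of x]] by simp
  ultimately show ?thesis using k by (simp only:) (intro sech_pow_bound lin_b)
qed

lemma cont_lnsech[continuous_intros]: "continuous_on S (\<lambda>x. ln (sech x))"
  by (intro continuous_intros) auto
lemma cont_T[continuous_intros]: "continuous_on S T"
  using T_cont continuous_on_subset by blast
lemma cont_T1[continuous_intros]: "continuous_on S T1"
  using T1_cont continuous_on_subset by blast

lemma cont_P: "continuous_on S (bP k)" unfolding bP_def[abs_def] by (intro continuous_intros)
lemma cont_Q: "continuous_on S (bQ k)" unfolding bQ_def[abs_def] by (intro continuous_intros) auto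
lemma cont_R: "continuous_on S (bR k)" unfolding bR_def[abs_def] by (intro continuous_intros)
lemma cont_S: "continuous_on S (bS k)" unfolding bS_def[abs_def] by (intro continuous_intros) auto
lemma cont_A: "continuous_on S (bA k)" unfolding bA_def[abs_def] by (intro continuous_intros) auto
lemma cont_SN: "continuous_on S (bSN k)" unfolding bSN_def[abs_def] by (intro continuous_intros) auto
lemma cont_SL: "continuous_on S (bSL k)" unfolding bSL_def[abs_def] by (intro continuous_intros) auto
lemma cont_XN: "continuous_on S (bXN k)" unfolding bXN_def[abs_def] by (intro continuous_intros)
lemma cont_DC: "continuous_on S (bDC k)" unfolding bDC_def[abs_def] by (intro continuous_intros) auto
lemma cont_DN: "continuous_on S (bDN k)" unfolding bDN_def[abs_def] by (intro continuous_intros)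

lemmas cont_basis = cont_P cont_Q cont_R cont_S cont_A cont_SN cont_SL cont_XN cont_DC cont_DN

lemma int_P: "k \<ge> 1 \<Longrightarrow> integrable lborel (bP k)" by (rule integrable_decay[OF cont_P bound_P])
lemma int_Q: "k \<ge> 1 \<Longrightarrow> integrable lborel (bQ k)" by (rule integrable_decay[OF cont_Q bound_Q])
lemma int_R: "k \<ge> 1 \<Longrightarrow> integrable lborel (bR k)" by (rule integrable_decay[OF cont_R bound_R])
lemma int_S: "k \<ge> 1 \<Longrightarrow> integrable lborel (bS k)" by (rule integrable_decay[OF cont_S bound_S])
lemma int_A: "k \<ge> 1 \<Longrightarrow> integrable lborel (bA k)" by (rule integrable_decay[OF cont_A bound_A])
lemma int_SN: "k \<ge> 1 \<Longrightarrow> integrable lborel (bSN k)" by (rule integrable_decay[OF cont_SN bound_SN])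
lemma int_SL: "k \<ge> 1 \<Longrightarrow> integrable lborel (bSL k)" by (rule integrable_decay[OF cont_SL bound_SL])
lemma int_XN: "k \<ge> 1 \<Longrightarrow> integrable lborel (bXN k)" by (rule integrable_decay[OF cont_XN bound_XN])
lemma int_DC: "k \<ge> 1 \<Longrightarrow> integrable lborel (bDC k)" by (rule integrable_decay[OF cont_DC bound_DC])
lemma int_DN: "k \<ge> 1 \<Longrightarrow> integrable lborel (bDN k)" by (rule integrable_decay[OF cont_DN bound_DN])

lemma ibp_gen:
  fixes G g :: "real \<Rightarrow> real"
  assumes "\<And>x. (G has_real_derivative g x) (at x)" "continuous_on UNIV g" "integrable lborel g"
    "\<And>x. \<bar>G x\<bar> \<le> C * ((1 + \<bar>x\<bar>) * sech x)"
  shows "integral\<^sup>L lborel g = 0"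
proof (rule ibp0[OF assms(1) _ assms(3)])
  show "isCont g x" for x using assms(2) by (simp add: continuous_on_eq_continuous_at)
  show "(G \<longlongrightarrow> 0) at_top" "(G \<longlongrightarrow> 0) at_bot" using decay_tendsto[OF assms(4)] by auto
qed

lemma pk_int: "pk k = integral\<^sup>L lborel (bP k)" unfolding pk_def bP_def[abs_def] ..
lemma qk_int: "qk k = integral\<^sup>L lborel (bQ k)" unfolding qk_def bQ_def[abs_def] ..
lemma rk_int: "rk k = integral\<^sup>L lborel (bR k)" unfolding rk_def bR_def[abs_def] ..
lemma sk_int: "sk k = integral\<^sup>L lborel (bS k)" unfolding sk_def bS_def[abs_def] ..
lemma ak_int: "ak k = integral\<^sup>L lborel (bA k)" unfolding ak_def bA_def[abs_def] ..

lemma pow_split: "k \<ge> 1 \<Longrightarrow> (s::real) ^ k = s * s ^ (k - 1)"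
  by (cases k) auto

lemma ibp_I1:
  assumes k: "k \<ge> 1"
  shows "real k * integral\<^sup>L lborel (bSN k) = pk k"
proof -
  define G where "G x = sech x ^ k * sin x" for x
  define g where "g x = bP k x - real k * bSN k x" for x
  have D: "(G has_real_derivative g x) (at x)" for x
  proof -
    have e: "sech x ^ k = sech x * sech x ^ (k - Suc 0)" using k pow_split by simp
    show ?thesis unfolding G_def[abs_def] g_def bP_def bSN_def
      by (rule derivative_eq_intros refl)+ (simp add: e algebra_simps)
  qed
  have c: "continuous_on UNIV g" unfolding g_def[abs_def] by (intro continuous_intros cont_basis)
  have i: "integrable lborel g" unfolding g_def[abs_def]
    by (intro Bochner_Integration.integrable_diff integrable_mult_right int_P int_SN k)
  have b: "\<bar>G x\<bar> \<le> 1 * ((1 + \<bar>x\<bar>) * sech x)" for x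
    unfolding G_def by (intro sech_pow_bound k lin_b b_sin)
  have "integral\<^sup>L lborel g = 0" by (rule ibp_gen[OF D c i b])
  moreover have "integral\<^sup>L lborel g = pk k - real k * integral\<^sup>L lborel (bSN k)"
    unfolding g_def pk_int using int_P[OF k] int_SN[OF k] by simp
  ultimately show ?thesis by simp
qed

lemma T_deriv_within[derivative_intros]: "(T has_real_derivative T1 x) (at x within S)"
  using T_deriv has_field_derivative_at_within by blast

lemma ibp_I2:
  assumes k: "k \<ge> 1"
  shows "real k * integral\<^sup>L lborel (bSL k) + integral\<^sup>L lborel (bSN k) = qk k"
proof -
  define G where "G x = sech x ^ k * ln (sech x) * sin x" for x
  define g where "g x = bQ k x - real k * bSL k x - bSN k x" for x
  have D: "(G has_real_derivative g x) (at x)" for x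
  proof -
    define Pm where "Pm = sech x ^ (k - Suc 0)"
    define Pk where "Pk = sech x ^ k"
    define Pk2 where "Pk2 = sech x ^ (k + 2)"
    have e: "Pk = sech x * Pm" unfolding Pk_def Pm_def using k pow_split by simp
    have e2: "Pk2 = Pk * sech x ^ 2" unfolding Pk_def Pk2_def by (simp add: power_add power2_eq_square)
    have tt: "tanh x ^ 2 = 1 - sech x ^ 2" using tanh_sech[of x] by simp
    have iv: "inverse (sech x) * sech x = 1" "1 / sech x * sech x = 1" by simp_all
    show ?thesis unfolding G_def[abs_def] g_def bQ_def bSL_def bSN_def
      apply (rule derivative_eq_intros refl sech_pos DERIV_sech cosh_real_nonzero)+
      apply (unfold Pm_def[symmetric] Pk2_def[symmetric] Pk_def[symmetric])
      using e e2 tt iv by algebra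
  qed
  have c: "continuous_on UNIV g" unfolding g_def[abs_def] by (intro continuous_intros cont_basis)
  have i: "integrable lborel g" unfolding g_def[abs_def]
    by (intro Bochner_Integration.integrable_diff Bochner_Integration.integrable_add integrable_mult_right int_P int_Q int_R int_S int_A int_SN int_SL int_XN int_DC int_DN k; simp)
  have b: "\<bar>G x\<bar> \<le> (1) * ((1 + \<bar>x\<bar>) * sech x)" for x
  proof -
    have "G x = sech x ^ k * (ln (sech x) * sin x)" unfolding G_def by (simp add: algebra_simps)
    moreover have "\<bar>ln (sech x) * sin x\<bar> \<le> (1) * (1 + \<bar>x\<bar>)"
      using prod_bound[OF ln_sech_bound[of x] b_sin[of x]] by (intro lin_b2; simp)
    ultimately show ?thesis using k by (simp only:) (rule sech_pow_bound)
  qed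
  have "integral\<^sup>L lborel g = 0" by (rule ibp_gen[OF D c i b])
  moreover have "integral\<^sup>L lborel g = qk k - real k * integral\<^sup>L lborel (bSL k) - integral\<^sup>L lborel (bSN k)"
    unfolding g_def pk_int qk_int rk_int sk_int ak_int using k by (simp add: int_P int_Q int_R int_S int_A int_SN int_SL int_XN int_DC int_DN)
  ultimately show ?thesis by simp
qed

lemma ibp_I3:
  assumes k: "k \<ge> 1"
  shows "integral\<^sup>L lborel (bXN k) = pk k - real k * ak k"
proof -
  define G where "G x = x * sech x ^ k * cos x" for x
  define g where "g x = bP k x - real k * bA k x - bXN k x" for x
  have D: "(G has_real_derivative g x) (at x)" for x
  proof -
    define Pm where "Pm = sech x ^ (k - Suc 0)"
    define Pk where "Pk = sech x ^ k"
    define Pk2 where "Pk2 = sech x ^ (k + 2)"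
    have e: "Pk = sech x * Pm" unfolding Pk_def Pm_def using k pow_split by simp
    have e2: "Pk2 = Pk * sech x ^ 2" unfolding Pk_def Pk2_def by (simp add: power_add power2_eq_square)
    have tt: "tanh x ^ 2 = 1 - sech x ^ 2" using tanh_sech[of x] by simp
    have iv: "inverse (sech x) * sech x = 1" "1 / sech x * sech x = 1" by simp_all
    show ?thesis unfolding G_def[abs_def] g_def bP_def bA_def bXN_def
      apply (rule derivative_eq_intros refl sech_pos DERIV_sech cosh_real_nonzero)+
      apply (unfold Pm_def[symmetric] Pk2_def[symmetric] Pk_def[symmetric])
      using e e2 tt iv by algebra
  qed
  have c: "continuous_on UNIV g" unfolding g_def[abs_def] by (intro continuous_intros cont_basis)
  have i: "integrable lborel g" unfolding g_def[abs_def]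
    by (intro Bochner_Integration.integrable_diff Bochner_Integration.integrable_add integrable_mult_right int_P int_Q int_R int_S int_A int_SN int_SL int_XN int_DC int_DN k; simp)
  have b: "\<bar>G x\<bar> \<le> (1) * ((1 + \<bar>x\<bar>) * sech x)" for x
  proof -
    have "G x = sech x ^ k * (x * cos x)" unfolding G_def by (simp add: algebra_simps)
    moreover have "\<bar>x * cos x\<bar> \<le> (1) * (1 + \<bar>x\<bar>)"
      using prod_bound[OF b_x[of x] b_cos[of x]] by (intro lin_b2; simp)
    ultimately show ?thesis using k by (simp only:) (rule sech_pow_bound)
  qed
  have "integral\<^sup>L lborel g = 0" by (rule ibp_gen[OF D c i b])
  moreover have "integral\<^sup>L lborel g = pk k - real k * ak k - integral\<^sup>L lborel (bXN k)"
    unfolding g_def pk_int qk_int rk_int sk_int ak_int using k by (simp add: int_P int_Q int_R int_S int_A int_SN int_SL int_XN int_DC int_DN)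
  ultimately show ?thesis by simp
qed

lemma ibp_P:
  assumes k: "k \<ge> 1"
  shows "(real k ^ 2 + 1) * pk k = real k * (real k + 1) * pk (k + 2)"
proof -
  define G where "G x = - real k * sech x ^ k * tanh x * cos x + sech x ^ k * sin x" for x
  define g where "g x = (real k ^ 2 + 1) * bP k x - real k * (real k + 1) * bP (k + 2) x" for x
  have D: "(G has_real_derivative g x) (at x)" for x
  proof -
    define Pm where "Pm = sech x ^ (k - Suc 0)"
    define Pk where "Pk = sech x ^ k"
    define Pk2 where "Pk2 = sech x ^ (k + 2)"
    have e: "Pk = sech x * Pm" unfolding Pk_def Pm_def using k pow_split by simp
    have e2: "Pk2 = Pk * sech x ^ 2" unfolding Pk_def Pk2_def by (simp add: power_add power2_eq_square)
    have tt: "tanh x ^ 2 = 1 - sech x ^ 2" using tanh_sech[of x] by simp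
    have iv: "inverse (sech x) * sech x = 1" "1 / sech x * sech x = 1" by simp_all
    show ?thesis unfolding G_def[abs_def] g_def bP_def
      apply (rule derivative_eq_intros refl sech_pos DERIV_sech cosh_real_nonzero)+
      apply (unfold Pm_def[symmetric] Pk2_def[symmetric] Pk_def[symmetric])
      using e e2 tt iv by algebra
  qed
  have c: "continuous_on UNIV g" unfolding g_def[abs_def] by (intro continuous_intros cont_basis)
  have i: "integrable lborel g" unfolding g_def[abs_def]
    by (intro Bochner_Integration.integrable_diff Bochner_Integration.integrable_add integrable_mult_right int_P int_Q int_R int_S int_A int_SN int_SL int_XN int_DC int_DN k; simp)
  have b: "\<bar>G x\<bar> \<le> (real k + 1) * ((1 + \<bar>x\<bar>) * sech x)" for x
  proof -
    have "G x = sech x ^ k * (- real k * tanh x * cos x + sin x)" unfolding G_def by (simp add: algebra_simps)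
    moreover have "\<bar>- real k * tanh x * cos x + sin x\<bar> \<le> (real k + 1) * (1 + \<bar>x\<bar>)"
      proof (intro lin_b)
      have "\<bar>- real k * tanh x * cos x\<bar> \<le> real k * 1" unfolding mult.assoc
        using prod_bound[OF abs_tanh_le1[of x] b_cos[of x]] by (simp add: abs_mult mult_left_le)
      thus "\<bar>- real k * tanh x * cos x + sin x\<bar> \<le> real k + 1" using b_sin[of x] by linarith
    qed
    ultimately show ?thesis using k by (simp only:) (rule sech_pow_bound)
  qed
  have "integral\<^sup>L lborel g = 0" by (rule ibp_gen[OF D c i b])
  moreover have "integral\<^sup>L lborel g = (real k ^ 2 + 1) * pk k - real k * (real k + 1) * pk (k + 2)"
    unfolding g_def pk_int qk_int rk_int sk_int ak_int using k by (simp add: int_P int_Q int_R int_S int_A int_SN int_SL int_XN int_DC int_DN)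
  ultimately show ?thesis by simp
qed

lemma ibp_Q:
  assumes k: "k \<ge> 1"
  shows "(real k ^ 2 + 1) * qk k - real k * (real k + 1) * qk (k + 2) + real k * (pk k - pk (k + 2)) - integral\<^sup>L lborel (bSN k) = 0"
proof -
  define G where "G x = - real k * sech x ^ k * tanh x * ln (sech x) * cos x + sech x ^ k * ln (sech x) * sin x" for x
  define g where "g x = (real k ^ 2 + 1) * bQ k x - real k * (real k + 1) * bQ (k + 2) x + real k * (bP k x - bP (k + 2) x) - bSN k x" for x
  have D: "(G has_real_derivative g x) (at x)" for x
  proof -
    define Pm where "Pm = sech x ^ (k - Suc 0)"
    define Pk where "Pk = sech x ^ k"
    define Pk2 where "Pk2 = sech x ^ (k + 2)"
    have e: "Pk = sech x * Pm" unfolding Pk_def Pm_def using k pow_split by simp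
    have e2: "Pk2 = Pk * sech x ^ 2" unfolding Pk_def Pk2_def by (simp add: power_add power2_eq_square)
    have tt: "tanh x ^ 2 = 1 - sech x ^ 2" using tanh_sech[of x] by simp
    have iv: "inverse (sech x) * sech x = 1" "1 / sech x * sech x = 1" by simp_all
    show ?thesis unfolding G_def[abs_def] g_def bP_def bQ_def bSN_def
      apply (rule derivative_eq_intros refl sech_pos DERIV_sech cosh_real_nonzero)+
      apply (unfold Pm_def[symmetric] Pk2_def[symmetric] Pk_def[symmetric])
      using e e2 tt iv by algebra
  qed
  have c: "continuous_on UNIV g" unfolding g_def[abs_def] by (intro continuous_intros cont_basis)
  have i: "integrable lborel g" unfolding g_def[abs_def]
    by (intro Bochner_Integration.integrable_diff Bochner_Integration.integrable_add integrable_mult_right int_P int_Q int_R int_S int_A int_SN int_SL int_XN int_DC int_DN k; simp)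
  have b: "\<bar>G x\<bar> \<le> (real k + 1) * ((1 + \<bar>x\<bar>) * sech x)" for x
  proof -
    have "G x = sech x ^ k * (- real k * tanh x * ln (sech x) * cos x + ln (sech x) * sin x)" unfolding G_def by (simp add: algebra_simps)
    moreover have "\<bar>- real k * tanh x * ln (sech x) * cos x + ln (sech x) * sin x\<bar> \<le> (real k + 1) * (1 + \<bar>x\<bar>)"
      proof (intro lin_b2)
      have "\<bar>- real k * tanh x * ln (sech x) * cos x\<bar> \<le> real k * \<bar>x\<bar>" unfolding mult.assoc
        using prod_bound[OF abs_tanh_le1[of x] prod_bound[OF ln_sech_bound[of x] b_cos[of x]]] by (simp add: abs_mult mult_left_mono)
      moreover have "\<bar>ln (sech x) * sin x\<bar> \<le> \<bar>x\<bar>" using prod_bound[OF ln_sech_bound[of x] b_sin[of x]] by simp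
      ultimately show "\<bar>- real k * tanh x * ln (sech x) * cos x + ln (sech x) * sin x\<bar> \<le> (real k + 1) * \<bar>x\<bar>"
        by (simp add: algebra_simps)
    qed simp
    ultimately show ?thesis using k by (simp only:) (rule sech_pow_bound)
  qed
  have "integral\<^sup>L lborel g = 0" by (rule ibp_gen[OF D c i b])
  moreover have "integral\<^sup>L lborel g = (real k ^ 2 + 1) * qk k - real k * (real k + 1) * qk (k + 2) + real k * (pk k - pk (k + 2)) - integral\<^sup>L lborel (bSN k)"
    unfolding g_def pk_int qk_int rk_int sk_int ak_int using k by (simp add: int_P int_Q int_R int_S int_A int_SN int_SL int_XN int_DC int_DN)
  ultimately show ?thesis by simp
qed

lemma ibp_J1:
  assumes k: "k \<ge> 1"
  shows "integral\<^sup>L lborel (bDC k) = real k * rk k - (real k + 1) * rk (k + 2) + sk k"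
proof -
  define G where "G x = T x * tanh x * sech x ^ k * cos x" for x
  define g where "g x = bDC k x + (real k + 1) * bR (k + 2) x - real k * bR k x - bS k x" for x
  have D: "(G has_real_derivative g x) (at x)" for x
  proof -
    define Pm where "Pm = sech x ^ (k - Suc 0)"
    define Pk where "Pk = sech x ^ k"
    define Pk2 where "Pk2 = sech x ^ (k + 2)"
    have e: "Pk = sech x * Pm" unfolding Pk_def Pm_def using k pow_split by simp
    have e2: "Pk2 = Pk * sech x ^ 2" unfolding Pk_def Pk2_def by (simp add: power_add power2_eq_square)
    have tt: "tanh x ^ 2 = 1 - sech x ^ 2" using tanh_sech[of x] by simp
    have iv: "inverse (sech x) * sech x = 1" "1 / sech x * sech x = 1" by simp_all
    show ?thesis unfolding G_def[abs_def] g_def bDC_def bR_def bS_def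
      apply (rule derivative_eq_intros refl sech_pos DERIV_sech cosh_real_nonzero)+
      apply (unfold Pm_def[symmetric] Pk2_def[symmetric] Pk_def[symmetric])
      using e e2 tt iv by algebra
  qed
  have c: "continuous_on UNIV g" unfolding g_def[abs_def] by (intro continuous_intros cont_basis)
  have i: "integrable lborel g" unfolding g_def[abs_def]
    by (intro Bochner_Integration.integrable_diff Bochner_Integration.integrable_add integrable_mult_right int_P int_Q int_R int_S int_A int_SN int_SL int_XN int_DC int_DN k; simp)
  have b: "\<bar>G x\<bar> \<le> (Wi) * ((1 + \<bar>x\<bar>) * sech x)" for x
  proof -
    have "G x = sech x ^ k * (T x * (tanh x * cos x))" unfolding G_def by (simp add: algebra_simps)
    moreover have "\<bar>T x * (tanh x * cos x)\<bar> \<le> (Wi) * (1 + \<bar>x\<bar>)"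
      using prod_bound[OF T_bound[of x] prod_bound[OF abs_tanh_le1[of x] b_cos[of x]]] by (intro lin_b; simp)
    ultimately show ?thesis using k by (simp only:) (rule sech_pow_bound)
  qed
  have "integral\<^sup>L lborel g = 0" by (rule ibp_gen[OF D c i b])
  moreover have "integral\<^sup>L lborel g = integral\<^sup>L lborel (bDC k) + (real k + 1) * rk (k + 2) - real k * rk k - sk k"
    unfolding g_def pk_int qk_int rk_int sk_int ak_int using k by (simp add: int_P int_Q int_R int_S int_A int_SN int_SL int_XN int_DC int_DN)
  ultimately show ?thesis by simp
qed

lemma ibp_J2:
  assumes k: "k \<ge> 1"
  shows "integral\<^sup>L lborel (bDN k) = real k * sk k - rk k"
proof -
  define G where "G x = T x * sech x ^ k * sin x" for x
  define g where "g x = bDN k x - real k * bS k x + bR k x" for x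
  have D: "(G has_real_derivative g x) (at x)" for x
  proof -
    define Pm where "Pm = sech x ^ (k - Suc 0)"
    define Pk where "Pk = sech x ^ k"
    define Pk2 where "Pk2 = sech x ^ (k + 2)"
    have e: "Pk = sech x * Pm" unfolding Pk_def Pm_def using k pow_split by simp
    have e2: "Pk2 = Pk * sech x ^ 2" unfolding Pk_def Pk2_def by (simp add: power_add power2_eq_square)
    have tt: "tanh x ^ 2 = 1 - sech x ^ 2" using tanh_sech[of x] by simp
    have iv: "inverse (sech x) * sech x = 1" "1 / sech x * sech x = 1" by simp_all
    show ?thesis unfolding G_def[abs_def] g_def bDN_def bR_def bS_def
      apply (rule derivative_eq_intros refl sech_pos DERIV_sech cosh_real_nonzero)+
      apply (unfold Pm_def[symmetric] Pk2_def[symmetric] Pk_def[symmetric])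
      using e e2 tt iv by algebra
  qed
  have c: "continuous_on UNIV g" unfolding g_def[abs_def] by (intro continuous_intros cont_basis)
  have i: "integrable lborel g" unfolding g_def[abs_def]
    by (intro Bochner_Integration.integrable_diff Bochner_Integration.integrable_add integrable_mult_right int_P int_Q int_R int_S int_A int_SN int_SL int_XN int_DC int_DN k; simp)
  have b: "\<bar>G x\<bar> \<le> (Wi) * ((1 + \<bar>x\<bar>) * sech x)" for x
  proof -
    have "G x = sech x ^ k * (T x * sin x)" unfolding G_def by (simp add: algebra_simps)
    moreover have "\<bar>T x * sin x\<bar> \<le> (Wi) * (1 + \<bar>x\<bar>)"
      using prod_bound[OF T_bound[of x] b_sin[of x]] by (intro lin_b; simp)
    ultimately show ?thesis using k by (simp only:) (rule sech_pow_bound)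
  qed
  have "integral\<^sup>L lborel g = 0" by (rule ibp_gen[OF D c i b])
  moreover have "integral\<^sup>L lborel g = integral\<^sup>L lborel (bDN k) - real k * sk k + rk k"
    unfolding g_def pk_int qk_int rk_int sk_int ak_int using k by (simp add: int_P int_Q int_R int_S int_A int_SN int_SL int_XN int_DC int_DN)
  ultimately show ?thesis by simp
qed

lemma sq2: "sqrt 2 * sqrt 2 = (2::real)" by simp
lemma sq2z: "sqrt 2 * sqrt 2 - 2 = (0::real)" by simp
lemma sq2p: "sqrt 2 > (0::real)" by simp

lemma phi3_deriv: "(phi3 has_real_derivative (- sqrt 2 * sech x * tanh x)) (at x)"
  unfolding phi3_def[abs_def] by (auto intro!: derivative_eq_intros)
lemma dphi3: "deriv phi3 x = - sqrt 2 * sech x * tanh x"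
  using phi3_deriv DERIV_imp_deriv by blast
lemma lnphi3: "ln (phi3 x) = ln 2 / 2 + ln (sech x)"
  unfolding phi3_def using sech_pos[of x] by (simp add: ln_mult ln_sqrt)
lemma phi3sq: "(phi3 x)\<^sup>2 = 2 * (sech x)\<^sup>2"
  unfolding phi3_def by (simp add: power_mult_distrib)

lemma ratio1: "deriv phi3 x / phi3 x = - tanh x"
  unfolding dphi3 phi3_def using sech_pos[of x] by simp
lemma ratio2: "deriv phi3 x / (2 * sqrt 2 * phi3 x) = - sqrt 2 / 4 * tanh x"
proof -
  have "deriv phi3 x / (2 * sqrt 2 * phi3 x) = - tanh x / (2 * sqrt 2)"
    unfolding dphi3 phi3_def using sech_pos[of x] by (simp add: field_simps)
  also have "\<dots> = - sqrt 2 / 4 * tanh x"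
    using sq2 by (simp add: field_simps)
  finally show ?thesis .
qed
lemma c1: "1 / (4 * sqrt 2) = sqrt 2 / (8::real)" using sq2 by (simp add: field_simps)
lemma c3: "3 / (4 * sqrt 2) = 3 * sqrt 2 / (8::real)" using sq2 by (simp add: field_simps)

lemma R1_eq: "R1 x = 2 * x * (sech x)\<^sup>2 * tanh x - sqrt 2 / 8 * (3 - 2 * (sech x)\<^sup>2) * T x + sqrt 2 / 4 * tanh x * T1 x"
  unfolding R1_def deriv_T dphi3 phi3_def
  apply (simp add: field_simps power2_eq_square)
  using sq2z by algebra

lemma R2_eq: "R2 x = (sech x)\<^sup>2 + 3 * sqrt 2 / 8 * T x - sqrt 2 / 4 * tanh x * T1 x"
  unfolding R2_def ratio2 c3 phi3sq deriv_T by simp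

lemma E_eq: "E x = sqrt 2 / 2 * sech x * (1/4 - ln 2 / 2 - ln (sech x)) - sqrt 2 / 2 * x * sech x * tanh x"
  unfolding E_def lnphi3 dphi3 unfolding phi3_def by (simp add: algebra_simps)

lemma F_eq: "F x = sqrt 2 / 2 * sech x * (1/4 + ln 2 / 2 + ln (sech x)) - sqrt 2 / 2 * x * sech x * tanh x"
  unfolding F_def E_eq lnphi3 unfolding phi3_def by (simp add: algebra_simps)

lemma h31_eq: "h31 x = (sech x)\<^sup>2 * cos x - tanh x * sin x"
  unfolding h31_def phi3sq ratio1 by simp
lemma h32_eq: "h32 x = - tanh x * sin x"
  unfolding h32_def ratio1 by simp

lemma integrable_sum_list:
  fixes L :: "(real \<times> (real \<Rightarrow> real)) list"
  assumes "\<And>p. p \<in> set L \<Longrightarrow> integrable lborel (snd p)"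
  shows "integrable lborel (\<lambda>x. (\<Sum>p\<leftarrow>L. fst p * snd p x))"
  using assms
proof (induction L)
  case Nil thus ?case by simp
next
  case (Cons a L)
  have ia: "integrable lborel (snd a)" using Cons.prems[of a] by simp
  have i1: "integrable lborel (\<lambda>x. fst a * snd a x)"
    by (rule Bochner_Integration.integrable_mult_right) (use ia in simp)
  have i2: "integrable lborel (\<lambda>x. (\<Sum>p\<leftarrow>L. fst p * snd p x))" using Cons by simp
  show ?case using Bochner_Integration.integrable_add[OF i1 i2] by simp
qed

lemma integral_sum_list:
  fixes L :: "(real \<times> (real \<Rightarrow> real)) list"
  assumes "\<And>p. p \<in> set L \<Longrightarrow> integrable lborel (snd p)"
  shows "(LINT x|lborel. (\<Sum>p\<leftarrow>L. fst p * snd p x)) = (\<Sum>p\<leftarrow>L. fst p * integral\<^sup>L lborel (snd p))"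
  using assms
proof (induction L)
  case Nil thus ?case by simp
next
  case (Cons a L)
  have ia: "integrable lborel (snd a)" using Cons.prems[of a] by simp
  have i1: "integrable lborel (\<lambda>x. fst a * snd a x)"
    by (rule Bochner_Integration.integrable_mult_right) (use ia in simp)
  have i2: "integrable lborel (\<lambda>x. (\<Sum>p\<leftarrow>L. fst p * snd p x))"
    using Cons.prems by (intro integrable_sum_list) simp
  have "(LINT x|lborel. (\<Sum>p\<leftarrow>a # L. fst p * snd p x)) = (LINT x|lborel. fst a * snd a x) + (LINT x|lborel. (\<Sum>p\<leftarrow>L. fst p * snd p x))"
    using i1 i2 by simp
  also have "\<dots> = fst a * integral\<^sup>L lborel (snd a) + (\<Sum>p\<leftarrow>L. fst p * integral\<^sup>L lborel (snd p))"
    using Cons by simp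
  finally show ?case by simp
qed

lemma tz: "tanh x ^ 2 + sech x ^ 2 - 1 = 0" using tanh_sech[of x] by simp

lemmas bdefs = bP_def bQ_def bR_def bS_def bA_def bSN_def bSL_def bXN_def bDC_def bDN_def
lemmas lsimps = list.map sum_list.Cons sum_list.Nil prod.sel add_0_right
definition L1 :: "(real \<times> (real \<Rightarrow> real)) list" where
  "L1 = [(((- 4)), bDN 1),
   (((- 5/4) * sqrt 2 + (- 1/2) * ln 2 * sqrt 2), bSN 1),
   (((6)), bS 1),
   (((- 1) * sqrt 2), bSL 1),
   (((10)), bDN 3),
   (((5/4) * sqrt 2 + (1/2) * ln 2 * sqrt 2), bP 3),
   (((- 6)), bR 3),
   (((1) * sqrt 2), bQ 3),
   (((15/2) * sqrt 2 + (3) * ln 2 * sqrt 2), bSN 3),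
   (((- 12)), bS 3),
   (((6) * sqrt 2), bSL 3),
   (((4)), bDC 3),
   (((- 6)), bDN 5),
   (((- 15/2) * sqrt 2 + (- 3) * ln 2 * sqrt 2), bP 5),
   (((12)), bR 5),
   (((- 6) * sqrt 2), bQ 5),
   (((- 11/2) * sqrt 2 + (- 3) * ln 2 * sqrt 2), bSN 5),
   (((6)), bS 5),
   (((- 6) * sqrt 2), bSL 5),
   (((- 6)), bDC 5),
   (((11/2) * sqrt 2 + (3) * ln 2 * sqrt 2), bP 7),
   (((- 6)), bR 7),
   (((6) * sqrt 2), bQ 7),
   (((1) * sqrt 2), bXN 1),
   (((- 19) * sqrt 2), bXN 3),
   (((- 1) * sqrt 2), bA 3),
   (((48) * sqrt 2), bXN 5),
   (((18) * sqrt 2), bA 5),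
   (((- 30) * sqrt 2), bXN 7),
   (((- 30) * sqrt 2), bA 7)]"

definition L2 :: "(real \<times> (real \<Rightarrow> real)) list" where
  "L2 = [(((- 1/8) * sqrt 2 + (- 1/4) * ln 2 * sqrt 2), bSN 1),
   (((- 1/2) * sqrt 2), bSL 1),
   (((- 1)), bDN 3),
   (((- 3/4) * sqrt 2 + (1/2) * ln 2 * sqrt 2), bSN 3),
   (((1)), bS 3),
   (((1) * sqrt 2), bSL 3),
   (((1)), bDN 5),
   (((2) * sqrt 2), bSN 5),
   (((1/2) * sqrt 2), bXN 1),
   (((- 7/2) * sqrt 2), bXN 3),
   (((3) * sqrt 2), bXN 5)]"

definition L3 :: "(real \<times> (real \<Rightarrow> real)) list" where
  "L3 = [(((7/2) * sqrt 2), bSN 3),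
   (((- 7/2) * sqrt 2), bP 5),
   (((- 7) * sqrt 2), bSN 5),
   (((7) * sqrt 2), bP 7),
   (((- 6) * sqrt 2), bXN 3),
   (((18) * sqrt 2), bXN 5),
   (((6) * sqrt 2), bA 5),
   (((- 12) * sqrt 2), bXN 7),
   (((- 12) * sqrt 2), bA 7)]"

definition L4 :: "(real \<times> (real \<Rightarrow> real)) list" where
  "L4 = [(((- 1/8) * sqrt 2 + (1/4) * ln 2 * sqrt 2), bSN 1),
   (((1/2) * sqrt 2), bSL 1),
   (((1/8) * sqrt 2 + (- 1/4) * ln 2 * sqrt 2), bP 3),
   (((- 1/2) * sqrt 2), bQ 3),
   (((1/2) * sqrt 2), bXN 1),
   (((- 1/2) * sqrt 2), bXN 3),
   (((- 1/2) * sqrt 2), bA 3)]"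


lemma pw4: "E x * h31 x = (\<Sum>p\<leftarrow>L4. fst p * snd p x)"
  unfolding E_eq h31_eq L4_def lsimps bdefs
  apply (simp add: field_simps)
  using sq2z tz[of x] by algebra

lemma pw3: "(6 * x * tanh x * (sech x)\<^sup>2 - 7/2 * (sech x)\<^sup>2) * phi3 x * (1 - (phi3 x)\<^sup>2) * h31 x = (\<Sum>p\<leftarrow>L3. fst p * snd p x)"
  unfolding h31_eq phi3sq unfolding phi3_def L3_def lsimps bdefs
  apply (simp add: field_simps)
  using sq2z tz[of x] by algebra

lemma pw2: "Delta2 x * h32 x = (\<Sum>p\<leftarrow>L2. fst p * snd p x)"
  unfolding Delta2_def h32_eq phi3sq F_eq R1_eq R2_eq unfolding phi3_def L2_def lsimps bdefs
  apply (simp add: field_simps)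
  using sq2z tz[of x] by algebra

lemma pw1: "Delta1 x * h31 x = (\<Sum>p\<leftarrow>L1. fst p * snd p x)"
  unfolding Delta1_def h31_eq phi3sq F_eq R1_eq R2_eq unfolding phi3_def L1_def lsimps bdefs
  apply (simp add: field_simps)
  using sq2z tz[of x] by algebra

lemma SN_val: "k \<ge> 1 \<Longrightarrow> integral\<^sup>L lborel (bSN k) = pk k / real k"
  using ibp_I1[of k] by (simp add: field_simps)
lemma SL_val: "k \<ge> 1 \<Longrightarrow> integral\<^sup>L lborel (bSL k) = (qk k - pk k / real k) / real k"
  using ibp_I2[of k] SN_val[of k] by (simp add: field_simps)
lemma XN_val: "k \<ge> 1 \<Longrightarrow> integral\<^sup>L lborel (bXN k) = pk k - real k * ak k"
  using ibp_I3[of k] by simp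
lemma DC_val: "k \<ge> 1 \<Longrightarrow> integral\<^sup>L lborel (bDC k) = real k * rk k - (real k + 1) * rk (k + 2) + sk k"
  using ibp_J1[of k] by simp
lemma DN_val: "k \<ge> 1 \<Longrightarrow> integral\<^sup>L lborel (bDN k) = real k * sk k - rk k"
  using ibp_J2[of k] by simp

lemmas vals = SN_val SL_val XN_val DC_val DN_val pk_int[symmetric] qk_int[symmetric] rk_int[symmetric] sk_int[symmetric] ak_int[symmetric]

lemma p3: "pk 3 = pk 1" using ibp_P[of 1] by (simp add: eval_nat_numeral)
lemma p5: "pk 5 = 5/6 * pk 1" using ibp_P[of 3] p3 by (simp add: eval_nat_numeral)
lemma p7: "pk 7 = 13/18 * pk 1" using ibp_P[of 5] p5 by (simp add: eval_nat_numeral)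
lemma q3: "qk 3 = qk 1 - pk 1 / 2" using ibp_Q[of 1] p3 SN_val[of 1] by (simp add: eval_nat_numeral)
lemma q5: "qk 5 = (10 * qk 3 + 3 * (pk 3 - pk 5) - pk 3 / 3) / 12"
  using ibp_Q[of 3] SN_val[of 3] by (simp add: field_simps eval_nat_numeral)
lemma q7: "qk 7 = (26 * qk 5 + 5 * (pk 5 - pk 7) - pk 5 / 5) / 30"
  using ibp_Q[of 5] SN_val[of 5] by (simp add: field_simps eval_nat_numeral)

lemma ints_all: "k \<ge> 1 \<Longrightarrow> integrable lborel (bP k) \<and> integrable lborel (bQ k) \<and> integrable lborel (bR k) \<and>
   integrable lborel (bS k) \<and> integrable lborel (bA k) \<and> integrable lborel (bSN k) \<and> integrable lborel (bSL k) \<and>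
   integrable lborel (bXN k) \<and> integrable lborel (bDC k) \<and> integrable lborel (bDN k)"
  by (simp add: int_P int_Q int_R int_S int_A int_SN int_SL int_XN int_DC int_DN)

lemma g4: "gamma4 = sqrt 2 * (qk 1 - qk 3 + ak 1 - 2 * ak 3)"
proof -
  have "gamma4 = - 2 * (LINT x|lborel. (\<Sum>p\<leftarrow>L4. fst p * snd p x))"
    unfolding gamma4_def ip_def pw4 ..
  also have "\<dots> = - 2 * (\<Sum>p\<leftarrow>L4. fst p * integral\<^sup>L lborel (snd p))"
    by (subst integral_sum_list) (auto simp: L4_def ints_all)
  finally have "gamma4 = - 2 * (\<Sum>p\<leftarrow>L4. fst p * integral\<^sup>L lborel (snd p))" .
  hence "gamma4 = - 2 * ((- 1/8 * sqrt 2 + 1/4 * ln 2 * sqrt 2) * (pk 1 / 1) + 1/2 * sqrt 2 * ((qk 1 - pk 1 / 1) / 1)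
     + (1/8 * sqrt 2 + - 1/4 * ln 2 * sqrt 2) * pk 3 - 1/2 * sqrt 2 * qk 3 + 1/2 * sqrt 2 * (pk 1 - 1 * ak 1)
     - 1/2 * sqrt 2 * (pk 3 - 3 * ak 3) - 1/2 * sqrt 2 * ak 3)"
    unfolding L4_def lsimps by (simp add: vals)
  thus ?thesis unfolding p3 q3 by (simp add: field_simps)
qed

lemma g3: "gamma3 =
      sqrt 2 * (- 33/2 * pk 3 + 127/2 * pk 5 - 47 * pk 7 + 18 * ak 3 - 84 * ak 5 + 72 * ak 7)"
proof -
  have "gamma3 = (LINT x|lborel. (\<Sum>p\<leftarrow>L3. fst p * snd p x))"
    by (simp only: gamma3_def ip_def pw3)
  also have "\<dots> = (\<Sum>p\<leftarrow>L3. fst p * integral\<^sup>L lborel (snd p))"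
    by (subst integral_sum_list) (auto simp: L3_def ints_all)
  finally show ?thesis unfolding L3_def lsimps
    by (simp add: vals p3 p5 p7 q3 q5 q7 field_simps)
qed

lemma g2: "gamma2 =
      sqrt 2 * ((1/2 * ln 2 + 9/4) * pk 1 + (- 4 * ln 2 - 6) * pk 3 + (4 * ln 2 - 18) * pk 5
                + 24 * pk 7)
    + sqrt 2 * (qk 1 - 8 * qk 3 + 8 * qk 5 - ak 1 + 21 * ak 3 - 30 * ak 5)
    + 2 * rk 3 - 2 * rk 5 - 4 * sk 3 + 10 * sk 5"
proof -
  have "gamma2 = 2 * (LINT x|lborel. (\<Sum>p\<leftarrow>L2. fst p * snd p x))"
    by (simp only: gamma2_def ip_def pw2)
  also have "\<dots> = 2 * (\<Sum>p\<leftarrow>L2. fst p * integral\<^sup>L lborel (snd p))"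
    by (subst integral_sum_list) (auto simp: L2_def ints_all)
  finally show ?thesis unfolding L2_def lsimps
    by (simp add: vals p3 p5 p7 q3 q5 q7 field_simps)
qed

lemma g1: "gamma1 =
      sqrt 2 * (2 * pk 1 + (- 9 * ln 2 - 97/2) * pk 3 + (24 * ln 2 + 110) * pk 5
                + (- 15 * ln 2 - 127/2) * pk 7)
    + sqrt 2 * (qk 1 - 19 * qk 3 + 48 * qk 5 - 30 * qk 7
                - ak 1 + 56 * ak 3 - 222 * ak 5 + 180 * ak 7)
    + 4 * rk 1 - 4 * rk 3 - 28 * rk 5 + 30 * rk 7 + 2 * sk 1 + 22 * sk 3 - 30 * sk 5"
proof -
  have "gamma1 = (LINT x|lborel. (\<Sum>p\<leftarrow>L1. fst p * snd p x))"
    by (simp only: gamma1_def ip_def pw1)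
  also have "\<dots> = (\<Sum>p\<leftarrow>L1. fst p * integral\<^sup>L lborel (snd p))"
    by (subst integral_sum_list) (auto simp: L1_def ints_all)
  finally show ?thesis unfolding L1_def lsimps
    by (simp add: vals p3 p5 p7 q3 q5 q7 field_simps)
qed

theorem lemma2p20:
  shows "(gamma1 =
      sqrt 2 * (2 * pk 1 + (- 9 * ln 2 - 97/2) * pk 3 + (24 * ln 2 + 110) * pk 5
                + (- 15 * ln 2 - 127/2) * pk 7)
    + sqrt 2 * (qk 1 - 19 * qk 3 + 48 * qk 5 - 30 * qk 7
                - ak 1 + 56 * ak 3 - 222 * ak 5 + 180 * ak 7)
    + 4 * rk 1 - 4 * rk 3 - 28 * rk 5 + 30 * rk 7 + 2 * sk 1 + 22 * sk 3 - 30 * sk 5) \<and>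
    (gamma2 =
      sqrt 2 * ((1/2 * ln 2 + 9/4) * pk 1 + (- 4 * ln 2 - 6) * pk 3 + (4 * ln 2 - 18) * pk 5
                + 24 * pk 7)
    + sqrt 2 * (qk 1 - 8 * qk 3 + 8 * qk 5 - ak 1 + 21 * ak 3 - 30 * ak 5)
    + 2 * rk 3 - 2 * rk 5 - 4 * sk 3 + 10 * sk 5) \<and>
    (gamma3 =
      sqrt 2 * (- 33/2 * pk 3 + 127/2 * pk 5 - 47 * pk 7 + 18 * ak 3 - 84 * ak 5 + 72 * ak 7)) \<and>
    (gamma4 = sqrt 2 * (qk 1 - qk 3 + ak 1 - 2 * ak 3))"
  using g1 g2 g3 g4 by blast

end
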